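(* Consider the unknown polynomial system $\dot x=A_\star Z(x)+B_\star W(x)u$ and data $\{\dot x^j,z^j,v^j\}_{j=0}^{T-1}$ generated by $\dot x^j=A_\star z^j+B_\star v^j+d^j$, where the unknown disturbance matrix $D:=[d^0\ \cdots\ d^{T-1}]$ satisfies $DD^\top\preceq T\omega I_n$ for a known $\omega\ge0$. Let $\epsilon>0$. Let $X_1:=[\dot x^0\ \cdots\ \dot x^{T-1}]$, $Z_0:=[z^0\ \cdots\ z^{T-1}]$, $V_0:=[v^0\ \cdots\ v^{T-1}]$, assume $\begin{bmatrix}Z_0\\ V_0\end{bmatrix}$ has full row rank, and define $$A_{\mathrm{e}}:=\begin{bmatrix}Z_0\\ V_0\end{bmatrix}\begin{bmatrix}Z_0\\ V_0\end{bmatrix}^\top,\ B_{\mathrm{e}}:=-\begin{bmatrix}Z_0\\ V_0\end{bmatrix}X_1^\top,\ C_{\mathrm{e}}:=-T\omega I+X_1X_1^\top,$$ $$\bar\zeta:=-A_{\mathrm{e}}^{-1}B_{\mathrm{e}},\quad \bar P:=A_{\mathrm{e}}^{-1/2},\quad \bar Q:=B_{\mathrm{e}}^\top A_{\mathrm{e}}^{-1}B_{\mathrm{e}}-C_{\mathrm{e}}.$$ If there exist polynomials $\ell,\eta,h:\mathbb{R}^n\to\mathbb{R}$ and a polynomial $K:\mathbb{R}^n\to\mathbb{R}^m$ such that for all $x\in\mathbb{R}^n$, $\eta(x)>0$ and $H(x)\preceq0$ with $$H(x):=\begin{bmatrix}\ell(x)h(x)+\epsilon+\frac{\partial h}{\partial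 x}(x)\,\bar\zeta^\top\begin{bmatrix}Z(x)\\ W(x)K(x)\end{bmatrix} & \star & \star\\ \eta(x)\bar P\begin{bmatrix}Z(x)\\ W(x)K(x)\end{bmatrix} & -2\eta(x)I_p & \star\\ \bar Q^{1/2}\frac{\partial h}{\partial x}(x)^\top & 0 & -2\eta(x)I_n\end{bmatrix},$$ then $\mathcal{I}:=\{x\in\mathbb{R}^n:h(x)\le0\}$ is invariant for the closed-loop system $\dot x=A_\star Z(x)+B_\star W(x)K(x)$.
   Context: $A_\star\in\mathbb{R}^{n\times N_A}$, $B_\star\in\mathbb{R}^{n\times N_B}$ are unknown constant matrices; $Z:\mathbb{R}^n\to\mathbb{R}^{N_A}$ is a known vector of monomials and $W:\mathbb{R}^n\to\mathbb{R}^{N_B\times m}$ a known matrix of monomials; $p:=N_A+N_B$; $z^j=Z(x^j)$, $v^j=W(x^j)u^j$ for sampled states/inputs, $\dot x^j$ sampled state derivatives. $\star$ denotes blocks determined by symmetry; $M^{1/2}$ is the positive semidefinite square root of $M\succeq0$; $\frac{\partial h}{\partial x}(x)$ is the gradient as a row vector. A set $\mathcal{I}$ is invariant for $\dot x=a(x)$ ($a$ polynomial) if every maximal solution starting in $\mathcal{I}$ remains in $\mathcal{I}$ on its whole interval of existence. *)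

theory Defs
  imports "HOL-Analysis.Analysis"
begin

definition monomial_fun :: "(real^'n::finite \<Rightarrow> real) \<Rightarrow> bool" where
  "monomial_fun f \<longleftrightarrow> (\<exists>(c::real) (\<alpha>::'n \<Rightarrow> nat). \<forall>x. f x = c * (\<Prod>i\<in>UNIV. (x$i) ^ \<alpha> i))"

definition poly_fun :: "(real^'n::finite \<Rightarrow> real) \<Rightarrow> bool" where
  "poly_fun f \<longleftrightarrow> (\<exists>(S::('n \<Rightarrow> nat) set) (c::('n \<Rightarrow> nat) \<Rightarrow> real). finite S \<and>
      (\<forall>x. f x = (\<Sum>\<alpha>\<in>S. c \<alpha> * (\<Prod>i\<in>UNIV. (x$i) ^ \<alpha> i))))"

definition poly_vec_fun :: "(real^'n::finite \<Rightarrow> real^'k::finite) \<Rightarrow> bool" where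
  "poly_vec_fun F \<longleftrightarrow> (\<forall>k. poly_fun (\<lambda>x. F x $ k))"

definition psd :: "real^'n::finite^'n \<Rightarrow> bool" where
  "psd M \<longleftrightarrow> transpose M = M \<and> (\<forall>v. 0 \<le> v \<bullet> (M *v v))"

definition loewner_le :: "real^'n::finite^'n \<Rightarrow> real^'n^'n \<Rightarrow> bool" where
  "loewner_le M N \<longleftrightarrow> psd (N - M)"

definition msqrt :: "real^'n::finite^'n \<Rightarrow> real^'n^'n" where
  "msqrt M = (THE S. psd S \<and> S ** S = M)"

text \<open>Gradient of h at x (as a vector; the row vector of the paper).\<close>
definition grad :: "(real^'n::finite \<Rightarrow> real) \<Rightarrow> real^'n \<Rightarrow> real^'n" where
  "grad h x = (\<chi> i. frechet_derivative h (at x) (axis i 1))"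

definition ode_solution :: "(real^'n::finite \<Rightarrow> real^'n) \<Rightarrow> (real \<Rightarrow> real^'n) \<Rightarrow> real set \<Rightarrow> bool" where
  "ode_solution a x J \<longleftrightarrow> is_interval J \<and> 0 \<in> J \<and> (\<forall>t\<in>J. 0 \<le> t) \<and>
     (\<forall>t\<in>J. (x has_vector_derivative a (x t)) (at t within J))"

definition maximal_solution :: "(real^'n::finite \<Rightarrow> real^'n) \<Rightarrow> (real \<Rightarrow> real^'n) \<Rightarrow> real set \<Rightarrow> bool" where
  "maximal_solution a x J \<longleftrightarrow> ode_solution a x J \<and>
     (\<forall>y J'. ode_solution a y J' \<and> J \<subseteq> J' \<and> (\<forall>t\<in>J. y t = x t) \<longrightarrow> J' = J)"

definition invariant_set :: "(real^'n::finite \<Rightarrow> real^'n) \<Rightarrow> (real^'n) set \<Rightarrow> bool" where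
  "invariant_set a S \<longleftrightarrow> (\<forall>x J. maximal_solution a x J \<and> x 0 \<in> S \<longrightarrow> (\<forall>t\<in>J. x t \<in> S))"

text \<open>Stacking [u; v] of vectors and [M; N] of matrices (p = N_A + N_B as sum type).\<close>
definition vstack :: "real^'a::finite \<Rightarrow> real^'b::finite \<Rightarrow> real^('a + 'b)" where
  "vstack u v = (\<chi> i. case i of Inl a \<Rightarrow> u $ a | Inr b \<Rightarrow> v $ b)"

definition mstack :: "real^'c::finite^'a::finite \<Rightarrow> real^'c^'b::finite \<Rightarrow> real^'c^('a + 'b)" where
  "mstack M N = (\<chi> i. case i of Inl a \<Rightarrow> M $ a | Inr b \<Rightarrow> N $ b)"

text \<open>Symmetric 3x3 block matrix
  [ s    *     *  ]
  [ u   Mp     *  ]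
  [ w    0    Mn  ]
 with scalar s, p-vector u, n-vector w, indexed by unit + ('p + 'n).\<close>
definition block3 :: "real \<Rightarrow> real^'p::finite \<Rightarrow> real^'n::finite \<Rightarrow> real^'p^'p \<Rightarrow> real^'n^'n
     \<Rightarrow> real^(unit + ('p + 'n))^(unit + ('p + 'n))" where
  "block3 s u w Mp Mn = (\<chi> i j. case (i, j) of
      (Inl _, Inl _) \<Rightarrow> s
    | (Inr (Inl a), Inl _) \<Rightarrow> u $ a
    | (Inl _, Inr (Inl a)) \<Rightarrow> u $ a
    | (Inr (Inr k), Inl _) \<Rightarrow> w $ k
    | (Inl _, Inr (Inr k)) \<Rightarrow> w $ k
    | (Inr (Inl a), Inr (Inl b)) \<Rightarrow> Mp $ a $ b
    | (Inr (Inr k), Inr (Inr l)) \<Rightarrow> Mn $ k $ l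
    | _ \<Rightarrow> 0)"

end

theory Submission
  imports Defs
begin



lemma transpose_diff: "transpose (A - B) = transpose A - transpose (B::'a::ab_group_add^'n^'m)"
  by (simp add: transpose_def vec_eq_iff)
lemma transpose_add: "transpose (A + B) = transpose A + transpose (B::'a::ab_group_add^'n^'m)"
  by (simp add: transpose_def vec_eq_iff)
lemma transpose_uminus: "transpose (- A) = - transpose (A::'a::ab_group_add^'n^'m)"
  by (simp add: transpose_def vec_eq_iff)

lemma matrix_vector_mult_neg: "(- A) *v x = - (A *v (x::'a::comm_ring_1^'n))"
  by (simp add: matrix_vector_mult_def vec_eq_iff sum_negf)
lemma matrix_vector_mult_neg_right: "A *v (- x) = - (A *v (x::'a::comm_ring_1^'n))"
  by (simp add: matrix_vector_mult_def vec_eq_iff sum_negf)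

lemma dot_transpose: "x \<bullet> (transpose A *v y) = (A *v x) \<bullet> (y::real^'m::finite)"
proof -
  have "x \<bullet> (transpose A *v y) = (y v* A) \<bullet> x" by (simp add: inner_commute)
  also have "\<dots> = y \<bullet> (A *v x)" by (rule dot_lmul_matrix)
  finally show ?thesis by (simp add: inner_commute)
qed

lemma quad_zero:
  fixes a c :: real
  assumes "\<forall>t. 0 \<le> 2*t*a + t^2*c"
  shows "a = 0"
proof (rule ccontr)
  assume a: "a \<noteq> 0"
  define t where "t = -a/(\<bar>c\<bar>+1)"
  have pos: "\<bar>c\<bar>+1 > 0" by simp
  have "0 \<le> 2*t*a + t^2*c" using assms by blast
  also have "2*t*a + t^2*c \<le> 2*t*a + t^2*\<bar>c\<bar>"
    by (intro add_left_mono mult_left_mono) auto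
  also have "2*t*a + t^2*\<bar>c\<bar> = a^2 * (-2*(\<bar>c\<bar>+1) + \<bar>c\<bar>) / (\<bar>c\<bar>+1)^2"
  proof -
    define C where "C = \<bar>c\<bar>+1"
    have C: "C > 0" "\<bar>c\<bar> = C - 1" unfolding C_def by auto
    show ?thesis unfolding t_def C_def[symmetric] C(2) using C(1)
      by (simp add: field_simps power2_eq_square)
  qed
  also have "\<dots> < 0"
    using a pos by (intro divide_neg_pos mult_pos_neg) auto
  finally show False by simp
qed

lemma sym_dot:
  fixes N :: "real^'n::finite^'n"
  assumes "transpose N = N"
  shows "x \<bullet> (N *v y) = (N *v x) \<bullet> y"
proof -
  have "x \<bullet> (N *v y) = (x v* N) \<bullet> y" by (simp add: dot_lmul_matrix)
  also have "x v* N = N *v x"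
    by (metis assms vector_transpose_matrix)
  finally show ?thesis .
qed

lemma sym_from_dot:
  fixes S :: "real^'n::finite^'n"
  assumes "\<And>x y. x \<bullet> (S *v y) = (S *v x) \<bullet> y"
  shows "transpose S = S"
proof -
  have "transpose S *v y = S *v y" for y
  proof -
    have "x \<bullet> (transpose S *v y) = x \<bullet> (S *v y)" for x
      using assms[of x y] by (simp add: dot_lmul_matrix[symmetric] inner_commute)
    then show ?thesis
      by (metis inner_commute vector_eq_rdot)
  qed
  then show ?thesis by (simp add: matrix_eq)
qed

lemma psd_kernel:
  fixes S :: "real^'n::finite^'n"
  assumes "psd S" "x \<bullet> (S *v x) = 0"
  shows "S *v x = 0"
proof -
  have sym: "transpose S = S" and pos: "\<And>v. 0 \<le> v \<bullet> (S *v v)" using assms(1) unfolding psd_def by auto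
  have "w \<bullet> (S *v x) = 0" for w
  proof (rule quad_zero)
    show "\<forall>t. 0 \<le> 2 * t * (w \<bullet> (S *v x)) + t\<^sup>2 * (w \<bullet> (S *v w))"
    proof
      fix t :: real
      have "0 \<le> (x + t *\<^sub>R w) \<bullet> (S *v (x + t *\<^sub>R w))" by (rule pos)
      also have "\<dots> = x \<bullet> (S *v x) + t * (x \<bullet> (S *v w)) + t * (w \<bullet> (S *v x)) + t^2 * (w \<bullet> (S *v w))"
        by (simp add: matrix_vector_right_distrib matrix_vector_mult_scaleR inner_add_left inner_add_right algebra_simps power2_eq_square)
      also have "x \<bullet> (S *v w) = w \<bullet> (S *v x)"
        using sym_dot[OF sym, of x w] by (simp add: inner_commute)
      finally show "0 \<le> 2 * t * (w \<bullet> (S *v x)) + t\<^sup>2 * (w \<bullet> (S *v w))"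
        using assms(2) by simp
    qed
  qed
  then show ?thesis by (metis inner_eq_zero_iff)
qed




lemma sym_eigvec:
  fixes N :: "real^'n::finite^'n"
  assumes sym: "transpose N = N" and sub: "subspace V"
    and inv: "\<And>x. x \<in> V \<Longrightarrow> N *v x \<in> V" and ne: "V \<noteq> {0}"
  shows "\<exists>v\<in>V. norm v = 1 \<and> (\<exists>\<mu>. N *v v = \<mu> *\<^sub>R v)"
proof -
  define K where "K = V \<inter> sphere 0 1"
  have cK: "compact K" unfolding K_def
    by (subst Int_commute) (intro compact_Int_closed compact_sphere closed_subspace sub)
  obtain y where y: "y \<in> V" "y \<noteq> 0" using ne sub subspace_0 by blast
  have "y /\<^sub>R norm y \<in> K" unfolding K_def using y sub
    by (simp add: subspace_scale)
  then have neK: "K \<noteq> {}" by blast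
  have cont: "continuous_on K (\<lambda>x. x \<bullet> (N *v x))"
    by (intro continuous_on_inner continuous_on_id matrix_vector_mult_linear_continuous_on)
  obtain v where v: "v \<in> K" and vmax: "\<And>u. u \<in> K \<Longrightarrow> u \<bullet> (N *v u) \<le> v \<bullet> (N *v v)"
    using continuous_attains_sup[OF cK neK cont] by blast
  define lam where "lam = v \<bullet> (N *v v)"
  have vV: "v \<in> V" and vn: "norm v = 1" using v unfolding K_def by auto
  have vv: "v \<bullet> v = 1" using vn by (simp add: dot_square_norm)
  have bound: "x \<bullet> (N *v x) \<le> lam * (x \<bullet> x)" if "x \<in> V" for x
  proof (cases "x = 0")
    case True then show ?thesis by simp
  next
    case False
    define u where "u = x /\<^sub>R norm x"
    have "u \<in> K" unfolding K_def u_def using that False sub by (simp add: subspace_scale)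
    then have "u \<bullet> (N *v u) \<le> lam" using vmax lam_def by blast
    moreover have "x \<bullet> (N *v x) = (norm x)^2 * (u \<bullet> (N *v u))"
      unfolding u_def using False by (simp add: matrix_vector_mult_scaleR power2_eq_square field_simps)
    moreover have "x \<bullet> x = (norm x)^2" by (simp add: dot_square_norm)
    ultimately show ?thesis
      by (metis mult.commute mult_right_mono zero_le_power2)
  qed
  define r where "r = lam *\<^sub>R v - N *v v"
  have rV: "r \<in> V" unfolding r_def using vV inv sub by (simp add: subspace_diff subspace_scale)
  have "w \<bullet> r = 0" if wV: "w \<in> V" for w
  proof -
    have "lam * (v \<bullet> w) - w \<bullet> (N *v v) = 0"
    proof (rule quad_zero)
      show "\<forall>t. 0 \<le> 2 * t * (lam * (v \<bullet> w) - w \<bullet> (N *v v)) + t\<^sup>2 * (lam * (w \<bullet> w) - w \<bullet> (N *v w))"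
      proof
        fix t :: real
        have xV: "v + t *\<^sub>R w \<in> V" using vV wV sub by (simp add: subspace_add subspace_scale)
        have e1: "v \<bullet> (N *v w) = w \<bullet> (N *v v)"
          using sym_dot[OF sym, of v w] by (simp add: inner_commute)
        have "(v + t *\<^sub>R w) \<bullet> (N *v (v + t *\<^sub>R w)) \<le> lam * ((v + t *\<^sub>R w) \<bullet> (v + t *\<^sub>R w))"
          by (rule bound[OF xV])
        then have "lam + t * (v \<bullet> (N *v w)) + t * (w \<bullet> (N *v v)) + t^2 * (w \<bullet> (N *v w))
             \<le> lam * (1 + 2 * t * (v \<bullet> w) + t^2 * (w \<bullet> w))"
          by (simp add: matrix_vector_right_distrib matrix_vector_mult_scaleR inner_add_left inner_add_right
                 algebra_simps power2_eq_square vv lam_def inner_commute[of w v])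
        then show "0 \<le> 2 * t * (lam * (v \<bullet> w) - w \<bullet> (N *v v)) + t\<^sup>2 * (lam * (w \<bullet> w) - w \<bullet> (N *v w))"
          unfolding e1 by (simp add: algebra_simps)
      qed
    qed
    then show ?thesis unfolding r_def by (simp add: inner_diff_right inner_commute)
  qed
  from this[OF rV] have "r = 0" by simp
  then have "N *v v = lam *\<^sub>R v" unfolding r_def by simp
  then show ?thesis using vV vn by blast
qed




lemma sym_eigbasis_sub:
  fixes N :: "real^'n::finite^'n"
  assumes sym: "transpose N = N"
  shows "subspace V \<Longrightarrow> (\<forall>x\<in>V. N *v x \<in> V) \<Longrightarrow>
    \<exists>B. B \<subseteq> V \<and> finite B \<and> pairwise orthogonal B \<and> (\<forall>b\<in>B. norm b = 1) \<and> span B = V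
        \<and> (\<forall>b\<in>B. \<exists>\<mu>. N *v b = \<mu> *\<^sub>R b)"
proof (induction "dim V" arbitrary: V rule: less_induct)
  case less
  show ?case
  proof (cases "V = {0}")
    case True
    then show ?thesis by (intro exI[of _ "{}"]) auto
  next
    case False
    obtain v where vV: "v \<in> V" and vn: "norm v = 1" and \<mu>: "\<exists>\<mu>. N *v v = \<mu> *\<^sub>R v"
      using sym_eigvec[OF sym less.prems(1) _ False] less.prems(2) by blast
    obtain mu where mu: "N *v v = mu *\<^sub>R v" using \<mu> by blast
    define V' where "V' = {x\<in>V. v \<bullet> x = 0}"
    have sub': "subspace V'" unfolding V'_def using less.prems(1)
      by (auto simp: subspace_def inner_add_right)
    have inv': "\<forall>x\<in>V'. N *v x \<in> V'"
    proof
      fix x assume "x \<in> V'"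
      then have "x \<in> V" "v \<bullet> x = 0" unfolding V'_def by auto
      moreover have "v \<bullet> (N *v x) = (N *v v) \<bullet> x" by (rule sym_dot[OF sym])
      ultimately show "N *v x \<in> V'" unfolding V'_def using less.prems(2) mu by simp
    qed
    have vv: "v \<bullet> v = 1" using vn by (simp add: dot_square_norm)
    have "V' \<subset> V" unfolding V'_def using vV vv by force
    then have "dim V' < dim V"
      using dim_psubset[of V' V] sub' less.prems(1) by (simp add: span_eq_iff[THEN iffD2])
    from less.hyps[OF this sub' inv'] obtain B where
      B: "B \<subseteq> V'" "finite B" "pairwise orthogonal B" "\<forall>b\<in>B. norm b = 1" "span B = V'"
         "\<forall>b\<in>B. \<exists>\<mu>. N *v b = \<mu> *\<^sub>R b" by blast
    have vB: "v \<notin> B" using B(1) vv unfolding V'_def by auto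
    show ?thesis
    proof (intro exI[of _ "insert v B"] conjI)
      show "insert v B \<subseteq> V" using B(1) vV unfolding V'_def by auto
      show "finite (insert v B)" using B(2) by simp
      show "pairwise orthogonal (insert v B)"
        using B(3) B(1) unfolding pairwise_insert V'_def orthogonal_def
        by (auto simp: inner_commute)
      show "\<forall>b\<in>insert v B. norm b = 1" using B(4) vn by auto
      show "\<forall>b\<in>insert v B. \<exists>\<mu>. N *v b = \<mu> *\<^sub>R b" using B(6) mu by auto
      show "span (insert v B) = V"
      proof
        show "span (insert v B) \<subseteq> V"
          using B(1) vV less.prems(1) unfolding V'_def by (intro span_minimal) auto
        show "V \<subseteq> span (insert v B)"
        proof
          fix x assume xV: "x \<in> V"
          have "x - (v \<bullet> x) *\<^sub>R v \<in> V'" unfolding V'_def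
            using xV vV less.prems(1) vv by (simp add: subspace_diff subspace_scale inner_diff_right)
          then have "x - (v \<bullet> x) *\<^sub>R v \<in> span B" using B(5) by simp
          then show "x \<in> span (insert v B)"
            using span_breakdown_eq by blast
        qed
      qed
    qed
  qed
qed

lemma sym_eigbasis:
  fixes N :: "real^'n::finite^'n"
  assumes sym: "transpose N = N"
  obtains B where "finite B" "pairwise orthogonal B" "\<And>b. b\<in>B \<Longrightarrow> norm b = 1" "span B = UNIV"
       "\<And>b. b\<in>B \<Longrightarrow> \<exists>\<mu>. N *v b = \<mu> *\<^sub>R b"
  using sym_eigbasis_sub[OF sym, of UNIV] by auto




lemma onb_dot:
  assumes "pairwise orthogonal B" "\<And>b. b\<in>B \<Longrightarrow> norm b = 1" "b \<in> B" "c \<in> B"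
  shows "b \<bullet> c = (if b = c then 1 else 0)"
  using assms unfolding pairwise_def orthogonal_def
  by (auto simp: dot_square_norm)

lemma onb_sum_dot:
  fixes B :: "(real^'n::finite) set"
  assumes "finite B" "pairwise orthogonal B" "\<And>b. b\<in>B \<Longrightarrow> norm b = 1" "c \<in> B"
  shows "c \<bullet> (\<Sum>b\<in>B. a b *\<^sub>R b) = a c"
proof -
  have "c \<bullet> (\<Sum>b\<in>B. a b *\<^sub>R b) = (\<Sum>b\<in>B. a b * (c \<bullet> b))"
    by (simp add: inner_sum_right)
  also have "\<dots> = (\<Sum>b\<in>B. if b = c then a b else 0)"
    using onb_dot[OF assms(2,3) assms(4)] by (intro sum.cong) auto
  also have "\<dots> = a c" using assms(1,4) by (simp add: sum.delta')
  finally show ?thesis .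
qed

lemma psd_sqrt_exists:
  fixes M :: "real^'n::finite^'n"
  assumes "psd M"
  shows "\<exists>S. psd S \<and> S ** S = M"
proof -
  have sym: "transpose M = M" and pos: "\<And>v. 0 \<le> v \<bullet> (M *v v)" using assms unfolding psd_def by auto
  obtain B where B: "finite B" "pairwise orthogonal B" "\<And>b. b\<in>B \<Longrightarrow> norm b = 1" "span B = UNIV"
       "\<And>b. b\<in>B \<Longrightarrow> \<exists>\<mu>. M *v b = \<mu> *\<^sub>R b"
    using sym_eigbasis[OF sym] by blast
  define m where "m b = b \<bullet> (M *v b)" for b
  have Mb: "M *v b = m b *\<^sub>R b" if bB: "b \<in> B" for b
  proof -
    obtain mu where mu: "M *v b = mu *\<^sub>R b" using B(5)[OF bB] by blast
    have "b \<bullet> b = 1" using B(3)[OF bB] by (simp add: dot_square_norm)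
    then show ?thesis unfolding m_def mu by simp
  qed
  have expand: "(\<Sum>b\<in>B. (x \<bullet> b) *\<^sub>R b) = x" for x
    using orthonormal_basis_expand[OF B(2) B(3), of x] B(1,4) by simp
  define f where "f x = (\<Sum>b\<in>B. (sqrt (m b) * (x \<bullet> b)) *\<^sub>R b)" for x
  have lf: "linear f"
  proof (rule linearI)
    show "f (x + y) = f x + f y" for x y
      unfolding f_def by (simp add: inner_add_left distrib_left scaleR_add_left sum.distrib)
    show "f (c *\<^sub>R x) = c *\<^sub>R f x" for c x
      unfolding f_def by (simp add: scaleR_sum_right mult.left_commute)
  qed
  define S where "S = matrix f"
  have Sx: "S *v x = f x" for x unfolding S_def using fun_cong[OF matrix_vector_mul(2)[OF lf], of x] by simp
  have bf: "b \<bullet> f x = sqrt (m b) * (x \<bullet> b)" if "b \<in> B" for b x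
    unfolding f_def by (rule onb_sum_dot[OF B(1,2,3) that])
  have bf': "f x \<bullet> b = sqrt (m b) * (x \<bullet> b)" if "b \<in> B" for b x
    using bf[OF that, of x] by (metis inner_commute)
  have mpos: "0 \<le> m b" for b unfolding m_def by (rule pos)
  have ff: "f (f x) = M *v x" for x
  proof -
    have "f (f x) = (\<Sum>b\<in>B. (sqrt (m b) * (f x \<bullet> b)) *\<^sub>R b)" by (rule f_def)
    also have "\<dots> = (\<Sum>b\<in>B. (x \<bullet> b) *\<^sub>R (M *v b))"
    proof (rule sum.cong[OF refl])
      fix b assume bB: "b \<in> B"
      have "sqrt (m b) * (f x \<bullet> b) = m b * (x \<bullet> b)"
        unfolding bf'[OF bB] using mpos[of b] by (simp add: mult.assoc[symmetric])
      then show "(sqrt (m b) * (f x \<bullet> b)) *\<^sub>R b = (x \<bullet> b) *\<^sub>R (M *v b)"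
        by (simp add: Mb[OF bB] mult.commute)
    qed
    also have "\<dots> = M *v (\<Sum>b\<in>B. (x \<bullet> b) *\<^sub>R b)"
      by (simp add: linear_sum[OF matrix_vector_mul_linear] matrix_vector_mult_scaleR)
    also have "\<dots> = M *v x" by (simp only: expand)
    finally show ?thesis .
  qed
  have xf: "x \<bullet> f y = (\<Sum>b\<in>B. sqrt (m b) * (y \<bullet> b) * (x \<bullet> b))" for x y
    unfolding f_def by (simp add: inner_sum_right)
  have symS: "transpose S = S"
    by (rule sym_from_dot) (simp add: Sx xf inner_commute[of "f _"] mult.commute mult.left_commute)
  have posS: "0 \<le> x \<bullet> (S *v x)" for x
    unfolding Sx xf using mpos by (intro sum_nonneg) (simp add: mult.assoc)
  have "S ** S = M"
    by (simp add: matrix_eq matrix_vector_mul_assoc[symmetric] Sx ff)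
  then show ?thesis using symS posS unfolding psd_def by blast
qed

lemma psd_sqrt_unique:
  fixes S T :: "real^'n::finite^'n"
  assumes S: "psd S" and T: "psd T" and eq: "S ** S = T ** T"
  shows "S = T"
proof -
  define N where "N = S - T"
  have sS: "transpose S = S" and sT: "transpose T = T" using S T unfolding psd_def by auto
  have symN: "transpose N = N" unfolding N_def using sS sT by (simp add: transpose_diff)
  obtain B where B: "finite B" "pairwise orthogonal B" "\<And>b. b\<in>B \<Longrightarrow> norm b = 1" "span B = UNIV"
       "\<And>b. b\<in>B \<Longrightarrow> \<exists>\<mu>. N *v b = \<mu> *\<^sub>R b"
    using sym_eigbasis[OF symN] by blast
  have Nb: "N *v b = 0" if bB: "b \<in> B" for b
  proof -
    obtain mu where mu: "N *v b = mu *\<^sub>R b" using B(5)[OF bB] by blast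
    have "S *v (N *v b) + N *v (T *v b) = (S ** S) *v b - (T ** T) *v b"
      unfolding N_def by (simp add: matrix_vector_mul_assoc[symmetric] matrix_vector_mult_diff_rdistrib
          matrix_vector_mult_diff_distrib)
    then have "S *v (N *v b) + N *v (T *v b) = 0" using eq by simp
    then have "b \<bullet> (S *v (N *v b)) + b \<bullet> (N *v (T *v b)) = 0"
      by (metis inner_add_right inner_zero_right)
    moreover have "b \<bullet> (N *v (T *v b)) = mu * (b \<bullet> (T *v b))"
      using sym_dot[OF symN, of b "T *v b"] mu by simp
    ultimately have e: "mu * (b \<bullet> (S *v b) + b \<bullet> (T *v b)) = 0"
      by (simp add: mu matrix_vector_mult_scaleR algebra_simps)
    show ?thesis
    proof (cases "mu = 0")
      case True then show ?thesis using mu by simp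
    next
      case False
      have p1: "0 \<le> b \<bullet> (S *v b)" "0 \<le> b \<bullet> (T *v b)" using S T unfolding psd_def by auto
      have "b \<bullet> (S *v b) = 0" "b \<bullet> (T *v b) = 0" using e False p1 by auto
      then have "S *v b = 0" "T *v b = 0" using psd_kernel S T by blast+
      then show ?thesis unfolding N_def by (simp add: matrix_vector_mult_diff_rdistrib)
    qed
  qed
  have "N *v x = 0" for x
  proof -
    have "(\<Sum>b\<in>B. (x \<bullet> b) *\<^sub>R b) = x"
      using orthonormal_basis_expand[OF B(2) B(3), of x] B(1,4) by simp
    then have "N *v x = N *v (\<Sum>b\<in>B. (x \<bullet> b) *\<^sub>R b)" by simp
    also have "\<dots> = (\<Sum>b\<in>B. (x \<bullet> b) *\<^sub>R (N *v b))"
      by (simp add: linear_sum[OF matrix_vector_mul_linear] matrix_vector_mult_scaleR)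
    finally have "N *v x = (\<Sum>b\<in>B. (x \<bullet> b) *\<^sub>R (N *v b))" .
    then show ?thesis using Nb by simp
  qed
  then have "N = 0" by (simp add: matrix_eq)
  then show ?thesis unfolding N_def by simp
qed

lemma msqrt:
  fixes M :: "real^'n::finite^'n"
  assumes "psd M"
  shows "psd (msqrt M)" "msqrt M ** msqrt M = M"
proof -
  have "\<exists>!S. psd S \<and> S ** S = M"
    using psd_sqrt_exists[OF assms] psd_sqrt_unique by blast
  from theI'[OF this] show "psd (msqrt M)" "msqrt M ** msqrt M = M"
    unfolding msqrt_def by auto
qed




lemma inv_props:
  fixes Ae :: "real^'p::finite^'p"
  assumes inv: "invertible Ae" and sA: "transpose Ae = Ae"
  shows "Ae ** matrix_inv Ae = mat 1" "matrix_inv Ae ** Ae = mat 1" "transpose (matrix_inv Ae) = matrix_inv Ae"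
proof -
  show 1: "Ae ** matrix_inv Ae = mat 1" "matrix_inv Ae ** Ae = mat 1"
    using inv unfolding invertible_def matrix_inv_def by (metis (mono_tags, lifting) someI_ex)+
  define Ai where "Ai = matrix_inv Ae"
  have "transpose Ai ** Ae = mat 1"
    using 1(1) sA unfolding Ai_def by (metis matrix_transpose_mul transpose_mat)
  then have "transpose Ai = transpose Ai ** (Ae ** Ai)" using 1(1) Ai_def by (simp add: matrix_mul_rid)
  also have "\<dots> = Ai" using \<open>transpose Ai ** Ae = mat 1\<close> by (simp add: matrix_mul_assoc)
  finally show "transpose (matrix_inv Ae) = matrix_inv Ae" unfolding Ai_def .
qed

lemma key_bound:
  fixes Ae :: "real^'p::finite^'p" and Be :: "real^'n::finite^'p" and Ce :: "real^'n^'n"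
    and Zs :: "real^'n^'p"
  assumes inv: "invertible Ae" and psdA: "psd Ae" and sC: "transpose Ce = Ce"
    and ell: "\<And>g. (Zs *v g) \<bullet> (Ae *v (Zs *v g)) + 2 * ((Zs *v g) \<bullet> (Be *v g)) + g \<bullet> (Ce *v g) \<le> 0"
  defines "zb \<equiv> - (matrix_inv Ae ** Be)"
    and "P \<equiv> msqrt (matrix_inv Ae)"
    and "Q \<equiv> transpose Be ** matrix_inv Ae ** Be - Ce"
  shows "psd Q"
    and "g \<bullet> (transpose Zs *v \<phi>) \<le> g \<bullet> (transpose zb *v \<phi>) + norm (msqrt Q *v g) * norm (P *v \<phi>)"
proof -
  define Ai where "Ai = matrix_inv Ae"
  have sA: "transpose Ae = Ae" using psdA unfolding psd_def by auto
  have AAi: "Ae ** Ai = mat 1" and AiA: "Ai ** Ae = mat 1" and sAi: "transpose Ai = Ai"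
    using inv_props[OF inv sA] unfolding Ai_def by auto
  have AAiv: "Ae *v (Ai *v x) = x" for x by (simp add: matrix_vector_mul_assoc AAi)
  have psdAi: "psd Ai" unfolding psd_def
  proof (intro conjI allI sAi)
    fix x
    have "x \<bullet> (Ai *v x) = (Ai *v x) \<bullet> (Ae *v (Ai *v x))"
      by (simp add: AAiv inner_commute)
    then show "0 \<le> x \<bullet> (Ai *v x)" using psdA unfolding psd_def by simp
  qed
  note Pp = msqrt[OF psdAi[unfolded Ai_def], folded P_def]
  have quad: "(Zs *v g - zb *v g) \<bullet> (Ae *v (Zs *v g - zb *v g)) - g \<bullet> (Q *v g)
      = (Zs *v g) \<bullet> (Ae *v (Zs *v g)) + 2 * ((Zs *v g) \<bullet> (Be *v g)) + g \<bullet> (Ce *v g)" for g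
  proof -
    define y where "y = Zs *v g"
    define b where "b = Be *v g"
    have zbg: "zb *v g = - (Ai *v b)"
      unfolding zb_def b_def Ai_def by (simp add: matrix_vector_mul_assoc[symmetric] matrix_vector_mult_neg)
    have Qg: "g \<bullet> (Q *v g) = b \<bullet> (Ai *v b) - g \<bullet> (Ce *v g)"
    proof -
      have "g \<bullet> (Q *v g) = g \<bullet> (transpose Be *v (Ai *v b)) - g \<bullet> (Ce *v g)"
        unfolding Q_def b_def Ai_def
        by (simp only: matrix_vector_mult_diff_rdistrib matrix_vector_mul_assoc[symmetric] inner_diff_right)
      also have "g \<bullet> (transpose Be *v (Ai *v b)) = b \<bullet> (Ai *v b)"
        unfolding b_def by (rule dot_transpose)
      finally show ?thesis .
    qed
    have s1: "(Ai *v b) \<bullet> (Ae *v y) = y \<bullet> b"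
      using sym_dot[OF sA, of "Ai *v b" y] by (simp add: AAiv inner_commute)
    have s2: "y \<bullet> (Ae *v (Ai *v b)) = y \<bullet> b" by (simp add: AAiv)
    have s3: "(Ai *v b) \<bullet> (Ae *v (Ai *v b)) = b \<bullet> (Ai *v b)" by (simp add: AAiv inner_commute)
    show ?thesis unfolding y_def[symmetric] b_def[symmetric] zbg Qg
      by (simp add: matrix_vector_right_distrib matrix_vector_mult_neg inner_add_left inner_add_right
          inner_diff_left inner_diff_right s1 s2 s3 inner_commute[of b y] matrix_vector_mult_diff_distrib)
  qed
  have ellQ: "(Zs *v g - zb *v g) \<bullet> (Ae *v (Zs *v g - zb *v g)) \<le> g \<bullet> (Q *v g)" for g
    using quad[of g] ell[of g] by linarith
  have sQ: "transpose Q = Q"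
    unfolding Q_def using sAi[unfolded Ai_def] sC
    by (simp add: transpose_diff matrix_transpose_mul matrix_mul_assoc)
  show psdQ: "psd Q" unfolding psd_def
  proof (intro conjI allI sQ)
    fix g
    show "0 \<le> g \<bullet> (Q *v g)"
      using ellQ[of g] psdA unfolding psd_def by (meson order_trans)
  qed
  note Qp = msqrt[OF psdQ]
  define d where "d = Zs *v g - zb *v g"
  define u where "u = Ae *v d"
  have "g \<bullet> (transpose Zs *v \<phi>) - g \<bullet> (transpose zb *v \<phi>) = d \<bullet> \<phi>"
    unfolding d_def dot_transpose by (simp add: inner_diff_left)
  also have "d \<bullet> \<phi> = d \<bullet> (Ae *v (P *v (P *v \<phi>)))"
    by (simp add: matrix_vector_mul_assoc Pp(2) AAi[unfolded Ai_def])
  also have "\<dots> = (P *v u) \<bullet> (P *v \<phi>)"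
    unfolding u_def using sym_dot[OF sA, of d] sym_dot[of P "Ae *v d" "P *v \<phi>"] Pp(1)
    unfolding psd_def by simp
  also have "\<dots> \<le> norm (P *v u) * norm (P *v \<phi>)" by (rule norm_cauchy_schwarz)
  also have "norm (P *v u) \<le> norm (msqrt Q *v g)"
  proof (rule power2_le_imp_le)
    have "(norm (P *v u))^2 = u \<bullet> (P *v (P *v u))"
      using sym_dot[of P u "P *v u"] Pp(1) unfolding psd_def by (simp add: dot_square_norm)
    also have "\<dots> = d \<bullet> u" unfolding u_def
      by (simp add: matrix_vector_mul_assoc matrix_mul_assoc Pp(2) AiA[unfolded Ai_def] inner_commute)
    also have "\<dots> \<le> g \<bullet> (Q *v g)" using ellQ[of g] unfolding u_def d_def .
    also have "\<dots> = (norm (msqrt Q *v g))^2"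
      using sym_dot[of "msqrt Q" g "msqrt Q *v g"] Qp(1) unfolding psd_def
      by (simp add: dot_square_norm matrix_vector_mul_assoc Qp(2))
    finally show "(norm (P *v u))^2 \<le> (norm (msqrt Q *v g))^2" .
  qed simp
  then have "norm (P *v u) * norm (P *v \<phi>) \<le> norm (msqrt Q *v g) * norm (P *v \<phi>)"
    by (simp add: mult_right_mono)
  finally show "g \<bullet> (transpose Zs *v \<phi>) \<le> g \<bullet> (transpose zb *v \<phi>) + norm (msqrt Q *v g) * norm (P *v \<phi>)"
    by linarith
qed




lemma sum_UNIV_Plus:
  fixes f :: "'a::finite + 'b::finite \<Rightarrow> 'c::comm_monoid_add"
  shows "(\<Sum>i\<in>UNIV. f i) = (\<Sum>a\<in>UNIV. f (Inl a)) + (\<Sum>b\<in>UNIV. f (Inr b))"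
  by (subst UNIV_Plus_UNIV[symmetric], subst sum.Plus) auto

lemma mat_scale_sum: "(\<Sum>b\<in>UNIV. ((c *\<^sub>R mat 1 :: real^'n::finite^'n)$a$b) * f b) = c * f a"
  by (simp add: mat_def if_distrib[of "\<lambda>x. x * _"] if_distrib[of "\<lambda>x. _ * x"] cong: if_cong)

lemma mat1_sum: "(\<Sum>b\<in>UNIV. ((mat 1 :: real^'n::finite^'n)$a$b) * f b) = f a"
  by (simp add: mat_def if_distrib[of "\<lambda>x. x * _"] cong: if_cong)

lemma block3_neg:
  fixes u :: "real^'p::finite" and w :: "real^'n::finite" and s \<eta> :: real
  assumes H: "loewner_le (block3 s u w ((-2*\<eta>) *\<^sub>R mat 1) ((-2*\<eta>) *\<^sub>R mat 1)) 0" and eta: "\<eta> > 0"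
  shows "s + (norm u)^2/(2*\<eta>) + (norm w)^2/(2*\<eta>) \<le> 0"
proof -
  define H where "H = block3 s u w ((-2*\<eta>) *\<^sub>R mat 1) ((-2*\<eta>) *\<^sub>R (mat 1::real^'n^'n))"
  define z :: "real^(unit + ('p + 'n))" where
    "z = (\<chi> i. case i of Inl _ \<Rightarrow> 1 | Inr (Inl a) \<Rightarrow> u$a/(2*\<eta>) | Inr (Inr k) \<Rightarrow> w$k/(2*\<eta>))"
  have "0 \<le> z \<bullet> ((0 - H) *v z)" using H unfolding loewner_le_def psd_def H_def by blast
  then have neg: "z \<bullet> (H *v z) \<le> 0"
    by (simp add: matrix_vector_mult_neg)
  have Hz_Inl: "(H *v z) $ Inl x = s + (norm u)^2/(2*\<eta>) + (norm w)^2/(2*\<eta>)" for x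
  proof -
    have "(H *v z) $ Inl x = s + (\<Sum>a\<in>UNIV. u$a * (u$a/(2*\<eta>))) + (\<Sum>k\<in>UNIV. w$k * (w$k/(2*\<eta>)))"
      unfolding matrix_vector_mult_def H_def block3_def z_def
      by (simp add: sum_UNIV_Plus)
    also have "(\<Sum>a\<in>UNIV. u$a * (u$a/(2*\<eta>))) = (norm u)^2/(2*\<eta>)"
      by (simp add: power2_norm_eq_inner inner_vec_def sum_divide_distrib)
    also have "(\<Sum>k\<in>UNIV. w$k * (w$k/(2*\<eta>))) = (norm w)^2/(2*\<eta>)"
      by (simp add: power2_norm_eq_inner inner_vec_def sum_divide_distrib)
    finally show ?thesis .
  qed
  have Hz_Inr: "(H *v z) $ Inr y = 0" for y
  proof (cases y)
    case (Inl a)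
    show ?thesis
      unfolding matrix_vector_mult_def H_def block3_def z_def Inl
      using eta by (simp add: sum_UNIV_Plus mat_scale_sum sum_negf mat1_sum)
  next
    case (Inr k)
    show ?thesis
      unfolding matrix_vector_mult_def H_def block3_def z_def Inr
      using eta by (simp add: sum_UNIV_Plus mat_scale_sum sum_negf mat1_sum)
  qed
  have "z \<bullet> (H *v z) = s + (norm u)^2/(2*\<eta>) + (norm w)^2/(2*\<eta>)"
  proof -
    have zI: "z $ Inl x = 1" for x by (simp add: z_def)
    have U: "(UNIV :: unit set) = {()}" by auto
    show ?thesis unfolding inner_vec_def by (simp add: sum_UNIV_Plus Hz_Inl Hz_Inr zI U)
  qed
  then show ?thesis using neg by simp
qed



lemma poly_differentiable:
  fixes h :: "real^'n::finite \<Rightarrow> real"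
  assumes "poly_fun h" shows "h differentiable (at x)"
proof -
  obtain S c where h: "\<And>x. h x = (\<Sum>\<alpha>\<in>S. c \<alpha> * (\<Prod>i\<in>UNIV. (x$i) ^ \<alpha> i))"
    using assms unfolding poly_fun_def by blast
  have "(\<lambda>x. \<Sum>\<alpha>\<in>S. c \<alpha> * (\<Prod>i\<in>UNIV. (x$i) ^ \<alpha> i)) differentiable (at x)"
    unfolding differentiable_def
    by (rule exI, (rule derivative_eq_intros refl bounded_linear_vec_nth[THEN bounded_linear.has_derivative] | simp)+)
  moreover have "h = (\<lambda>x. \<Sum>\<alpha>\<in>S. c \<alpha> * (\<Prod>i\<in>UNIV. (x$i) ^ \<alpha> i))" using h by auto
  ultimately show ?thesis by simp
qed

lemma grad_deriv:
  fixes h :: "real^'n::finite \<Rightarrow> real"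
  assumes "h differentiable (at y)"
  shows "(h has_derivative (\<lambda>v. grad h y \<bullet> v)) (at y)"
proof -
  define D where "D = frechet_derivative h (at y)"
  have hD: "(h has_derivative D) (at y)" using assms unfolding D_def by (simp add: frechet_derivative_works)
  have lin: "linear D" using has_derivative_linear[OF hD] .
  have "D v = grad h y \<bullet> v" for v
  proof -
    have "D v = D (\<Sum>i\<in>UNIV. (v$i) *\<^sub>R axis i 1)"
      using basis_expansion[of v] by (simp add: scalar_mult_eq_scaleR)
    also have "\<dots> = (\<Sum>i\<in>UNIV. (v$i) * D (axis i 1))"
      by (simp add: linear_sum[OF lin] linear_scale[OF lin])
    also have "\<dots> = grad h y \<bullet> v"
      unfolding grad_def D_def inner_vec_def by (simp add: mult.commute)
    finally show ?thesis .
  qed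
  then have "D = (\<lambda>v. grad h y \<bullet> v)" by auto
  then show ?thesis using hD by simp
qed




lemma invariance:
  fixes f :: "real^'n::finite \<Rightarrow> real^'n" and h l :: "real^'n \<Rightarrow> real" and G :: "real^'n \<Rightarrow> real^'n"
  assumes hd: "\<And>y. (h has_derivative (\<lambda>v. G y \<bullet> v)) (at y)"
    and bound: "\<And>y. G y \<bullet> f y \<le> - l y * h y - \<epsilon>" and eps: "\<epsilon> > 0"
  shows "invariant_set f {x. h x \<le> 0}"
  unfolding invariant_set_def
proof (intro allI impI ballI)
  fix x :: "real \<Rightarrow> real^'n" and J t1
  assume a: "maximal_solution f x J \<and> x 0 \<in> {x. h x \<le> 0}" and t1J: "t1 \<in> J"
  then have iJ: "is_interval J" and J0: "0 \<in> J" and Jpos: "\<And>t. t \<in> J \<Longrightarrow> 0 \<le> t"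
    and xd: "\<And>t. t \<in> J \<Longrightarrow> (x has_vector_derivative f (x t)) (at t within J)"
    and h0: "h (x 0) \<le> 0"
    unfolding maximal_solution_def ode_solution_def by auto
  define \<phi> where "\<phi> t = h (x t)" for t
  have phid: "(\<phi> has_real_derivative (G (x t) \<bullet> f (x t))) (at t within J)" if tJ: "t \<in> J" for t
  proof -
    have x': "(x has_derivative (\<lambda>s. s *\<^sub>R f (x t))) (at t within J)"
      using xd[OF tJ] unfolding has_vector_derivative_def .
    have h': "(h has_derivative (\<lambda>v. G (x t) \<bullet> v)) (at (x t) within x ` J)"
      using hd[of "x t"] by (rule has_derivative_at_withinI)
    have "((h \<circ> x) has_derivative ((\<lambda>v. G (x t) \<bullet> v) \<circ> (\<lambda>s. s *\<^sub>R f (x t)))) (at t within J)"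
      by (rule diff_chain_within[OF x' h'])
    moreover have "((\<lambda>v. G (x t) \<bullet> v) \<circ> (\<lambda>s. s *\<^sub>R f (x t))) = (\<lambda>s. (G (x t) \<bullet> f (x t)) * s)"
      by (auto simp: o_def)
    ultimately show ?thesis unfolding has_field_derivative_def \<phi>_def o_def by simp
  qed
  have cJ: "continuous_on J \<phi>"
    unfolding continuous_on_eq_continuous_within using phid DERIV_continuous by blast
  show "x t1 \<in> {x. h x \<le> 0}"
  proof (rule ccontr)
    assume "x t1 \<notin> {x. h x \<le> 0}"
    then have p1: "\<phi> t1 > 0" unfolding \<phi>_def by simp
    have t1pos: "0 \<le> t1" using Jpos t1J by blast
    have sub: "{0..t1} \<subseteq> J"
    proof
      fix t assume "t \<in> {0..t1}"
      then have "0 \<le> t" "t \<le> t1" by auto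
      then show "t \<in> J" using iJ J0 t1J unfolding is_interval_1 by blast
    qed
    have c01: "continuous_on {0..t1} \<phi>" using continuous_on_subset[OF cJ sub] .
    define S where "S = {t \<in> {0..t1}. \<phi> t \<le> (\<lambda>_. 0) t}"
    have cS: "closed S" unfolding S_def
      by (rule continuous_on_closed_Collect_le[OF c01 continuous_on_const closed_atLeastAtMost])
    have S0: "0 \<in> S" unfolding S_def using t1pos h0 \<phi>_def by auto
    have bS: "bdd_above S" unfolding S_def by (rule bdd_aboveI[of _ t1]) auto
    define t0 where "t0 = Sup S"
    have t0S: "t0 \<in> S" unfolding t0_def using closed_contains_Sup[OF _ bS cS] S0 by blast
    have up: "t \<le> t0" if "t \<in> S" for t unfolding t0_def using cSup_upper[OF that bS] .
    have t0r: "0 \<le> t0" "t0 \<le> t1" "\<phi> t0 \<le> 0" using t0S unfolding S_def by auto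
    have "t0 \<noteq> t1" using t0r(3) p1 by auto
    then have t0lt: "t0 < t1" using t0r(2) by simp
    have c2: "continuous_on {t0..t1} \<phi>" using continuous_on_subset[OF c01] t0r by auto
    obtain s where s: "t0 \<le> s" "s \<le> t1" "\<phi> s = 0"
      using IVT'[of \<phi> t0 0 t1] t0r(3) p1 t0lt c2 by auto
    have "s \<in> S" unfolding S_def using s t0r by auto
    then have "s = t0" using up s(1) by force
    then have phi0: "\<phi> t0 = 0" using s by simp
    have t0J: "t0 \<in> J" using sub t0r by auto
    have dneg: "G (x t0) \<bullet> f (x t0) < 0"
      using bound[of "x t0"] phi0 eps unfolding \<phi>_def by simp
    obtain d where d: "d > 0" "\<And>hh. hh > 0 \<Longrightarrow> t0 + hh \<in> J \<Longrightarrow> hh < d \<Longrightarrow> \<phi> t0 > \<phi> (t0 + hh)"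
      using has_real_derivative_neg_dec_right[OF phid[OF t0J] dneg] by blast
    define hh where "hh = min (d/2) (t1 - t0)"
    have hh: "hh > 0" "hh < d" "t0 + hh \<le> t1" unfolding hh_def using d t0lt by auto
    have "t0 + hh \<in> J" using sub hh t0r by auto
    then have "\<phi> (t0 + hh) < 0" using d(2)[OF hh(1) _ hh(2)] phi0 by simp
    then have "t0 + hh \<in> S" unfolding S_def using hh t0r by auto
    then show False using up hh(1) by force
  qed
qed




lemma scaleR_mv: "(c *\<^sub>R A) *v x = c *\<^sub>R (A *v (x::real^'m::finite))"
  by (simp add: matrix_vector_mult_def vec_eq_iff sum_distrib_left mult.assoc)

lemma dot_mv: "x \<bullet> (A *v y) = (transpose A *v x) \<bullet> (y::real^'m::finite)"
  using dot_transpose[of x "transpose A" y] by (simp del: transpose_matrix_vector)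

lemma dot_MMt: "y \<bullet> ((M ** transpose M) *v y) = (transpose M *v y) \<bullet> (transpose M *v (y::real^'m::finite))"
  by (simp only: matrix_vector_mul_assoc[symmetric] dot_mv)

theorem mainTheorem4:
  fixes A :: "real^'na::finite^'n::finite"
    and B :: "real^'nb::finite^'n"
    and Z :: "real^'n \<Rightarrow> real^'na"
    and W :: "real^'n \<Rightarrow> real^'m::finite^'nb"
    and xs :: "'t::finite \<Rightarrow> real^'n" and us :: "'t \<Rightarrow> real^'m"
    and xd :: "'t \<Rightarrow> real^'n" and d :: "'t \<Rightarrow> real^'n"
    and \<omega> \<epsilon> :: real
    and l \<eta> h :: "real^'n \<Rightarrow> real" and K :: "real^'n \<Rightarrow> real^'m"
  assumes Z_mon: "\<forall>k. monomial_fun (\<lambda>x. Z x $ k)"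
    and W_mon: "\<forall>k l. monomial_fun (\<lambda>x. W x $ k $ l)"
    and data: "\<forall>j. xd j = A *v Z (xs j) + B *v (W (xs j) *v us j) + d j"
    and omega: "\<omega> \<ge> 0"
    and noise: "loewner_le ((\<chi> i j. d j $ i) ** transpose (\<chi> i j. d j $ i))
                           ((real CARD('t) * \<omega>) *\<^sub>R mat 1)"
    and eps: "\<epsilon> > 0"
    and rank: "rank (mstack (\<chi> i j. Z (xs j) $ i) (\<chi> i j. (W (xs j) *v us j) $ i))
                 = CARD('na + 'nb)"
    and polys: "poly_fun l" "poly_fun \<eta>" "poly_fun h" "poly_vec_fun K"
    and eta_pos: "\<forall>x. \<eta> x > 0"
    and LMI: "\<forall>x. let X1 = (\<chi> i j. xd j $ i);
                    M = mstack (\<chi> i j. Z (xs j) $ i) (\<chi> i j. (W (xs j) *v us j) $ i);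
                    Ae = M ** transpose M;
                    Be = - (M ** transpose X1);
                    Ce = - ((real CARD('t) * \<omega>) *\<^sub>R mat 1) + X1 ** transpose X1;
                    \<zeta> = - (matrix_inv Ae ** Be);
                    P = msqrt (matrix_inv Ae);
                    Q = transpose Be ** matrix_inv Ae ** Be - Ce;
                    \<phi> = vstack (Z x) (W x *v K x)
                in loewner_le
                     (block3 (l x * h x + \<epsilon> + grad h x \<bullet> (transpose \<zeta> *v \<phi>))
                             (\<eta> x *\<^sub>R (P *v \<phi>))
                             (msqrt Q *v grad h x)
                             ((-2 * \<eta> x) *\<^sub>R mat 1)
                             ((-2 * \<eta> x) *\<^sub>R mat 1))
                     0"
  shows "invariant_set (\<lambda>x. A *v Z x + B *v (W x *v K x)) {x. h x \<le> 0}"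
proof -
  define X1 :: "real^'t^'n" where "X1 = (\<chi> i j. xd j $ i)"
  define M :: "real^'t^('na + 'nb)" where "M = mstack (\<chi> i j. Z (xs j) $ i) (\<chi> i j. (W (xs j) *v us j) $ i)"
  define Dm :: "real^'t^'n" where "Dm = (\<chi> i j. d j $ i)"
  define Ae where "Ae = M ** transpose M"
  define Be where "Be = - (M ** transpose X1)"
  define Ce :: "real^'n^'n" where "Ce = - ((real CARD('t) * \<omega>) *\<^sub>R mat 1) + X1 ** transpose X1"
  define zb where "zb = - (matrix_inv Ae ** Be)"
  define P where "P = msqrt (matrix_inv Ae)"
  define Q where "Q = transpose Be ** matrix_inv Ae ** Be - Ce"
  define AB :: "real^('na + 'nb)^'n" where "AB = (\<chi> i k. case k of Inl a \<Rightarrow> A$i$a | Inr b \<Rightarrow> B$i$b)"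
  define \<phi> where "\<phi> x = vstack (Z x) (W x *v K x)" for x
  define f where "f x = A *v Z x + B *v (W x *v K x)" for x
  have AB_vstack: "AB *v vstack u v = A *v u + B *v v" for u v
    unfolding AB_def vstack_def matrix_vector_mult_def
    by (simp add: vec_eq_iff sum_UNIV_Plus)
  have f_AB: "f x = AB *v \<phi> x" for x unfolding f_def \<phi>_def AB_vstack ..
  have X1_eq: "X1 = AB ** M + Dm"
    unfolding X1_def AB_def M_def Dm_def mstack_def
    using data by (simp add: vec_eq_iff matrix_matrix_mult_def matrix_vector_mult_def sum_UNIV_Plus)
  have ell: "(transpose AB *v g) \<bullet> (Ae *v (transpose AB *v g)) + 2 * ((transpose AB *v g) \<bullet> (Be *v g))
      + g \<bullet> (Ce *v g) \<le> 0" for g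
  proof -
    define y where "y = transpose AB *v g"
    define p where "p = transpose M *v y"
    define q where "q = transpose X1 *v g"
    have e1: "y \<bullet> (Ae *v y) = p \<bullet> p" unfolding Ae_def p_def by (rule dot_MMt)
    have e2: "y \<bullet> (Be *v g) = - (p \<bullet> q)"
      unfolding Be_def p_def q_def
      by (simp only: matrix_vector_mult_neg inner_minus_right matrix_vector_mul_assoc[symmetric] dot_mv)
    have e3: "g \<bullet> (Ce *v g) = - (real CARD('t) * \<omega>) * (g \<bullet> g) + q \<bullet> q"
      unfolding Ce_def q_def
      by (simp only: matrix_vector_mult_add_rdistrib matrix_vector_mult_neg inner_add_right inner_minus_right
          dot_MMt scaleR_mv matrix_vector_mul_lid inner_scaleR_right) simp
    have Dq: "transpose Dm *v g = q - p"
    proof -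
      have "transpose X1 = transpose M ** transpose AB + transpose Dm"
        unfolding X1_eq by (simp only: transpose_add matrix_transpose_mul)
      then have "q = transpose M *v (transpose AB *v g) + transpose Dm *v g"
        unfolding q_def by (simp only: matrix_vector_mult_add_rdistrib matrix_vector_mul_assoc)
      then show ?thesis unfolding p_def y_def by simp
    qed
    have "0 \<le> g \<bullet> (((real CARD('t) * \<omega>) *\<^sub>R mat 1 - Dm ** transpose Dm) *v g)"
      using noise unfolding loewner_le_def psd_def Dm_def by blast
    also have "\<dots> = (real CARD('t) * \<omega>) * (g \<bullet> g) - (q - p) \<bullet> (q - p)"
      by (simp only: matrix_vector_mult_diff_rdistrib inner_diff_right dot_MMt Dq scaleR_mv
          matrix_vector_mul_lid inner_scaleR_right)
    finally have noiseg: "(q - p) \<bullet> (q - p) \<le> (real CARD('t) * \<omega>) * (g \<bullet> g)" by simp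
    have "(q - p) \<bullet> (q - p) = q \<bullet> q - 2 * (p \<bullet> q) + p \<bullet> p"
      by (simp add: inner_diff_left inner_diff_right inner_commute)
    moreover have "- (real CARD('t) * \<omega>) * (g \<bullet> g) = - ((real CARD('t) * \<omega>) * (g \<bullet> g))" by simp
    ultimately show ?thesis unfolding y_def[symmetric] e1 e2 e3 using noiseg by linarith
  qed
  have Ae_sym: "transpose Ae = Ae" unfolding Ae_def by (simp add: matrix_transpose_mul)
  have Ae_psd: "psd Ae"
    unfolding psd_def using Ae_sym by (simp add: Ae_def dot_MMt del: transpose_matrix_vector)
  have Ae_inv: "invertible Ae"
  proof -
    have surjM: "surj ((*v) M)" using rank unfolding M_def full_rank_surjective .
    have ker: "y = 0" if "Ae *v y = 0" for y
    proof -
      have "(transpose M *v y) \<bullet> (transpose M *v y) = 0"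
        using that dot_MMt[of y M] unfolding Ae_def by simp
      then have tm: "transpose M *v y = 0" by simp
      obtain v where v: "y = M *v v" using surjM by (metis surjD)
      have "y \<bullet> y = 0" using dot_mv[of y M v] tm v by simp
      then show ?thesis by simp
    qed
    have "inj ((*v) Ae)"
    proof (rule injI)
      fix y1 y2 assume "Ae *v y1 = Ae *v y2"
      then have "Ae *v (y1 - y2) = 0" by (simp add: matrix_vector_mult_diff_distrib)
      then have "y1 - y2 = 0" by (rule ker)
      then show "y1 = y2" by simp
    qed
    then show ?thesis
      using invertible_left_inverse matrix_left_invertible_injective by blast
  qed
  have Ce_sym: "transpose Ce = Ce"
    unfolding Ce_def by (simp add: transpose_add transpose_diff transpose_uminus transpose_scalar matrix_transpose_mul)
  note kb = key_bound[OF Ae_inv Ae_psd Ce_sym ell, folded zb_def P_def Q_def]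
  have deriv_bound: "grad h x \<bullet> f x \<le> - l x * h x - \<epsilon>" for x
  proof -
    define g where "g = grad h x"
    define s where "s = l x * h x + \<epsilon> + g \<bullet> (transpose zb *v \<phi> x)"
    have H: "loewner_le (block3 s (\<eta> x *\<^sub>R (P *v \<phi> x)) (msqrt Q *v g)
              ((-2 * \<eta> x) *\<^sub>R mat 1) ((-2 * \<eta> x) *\<^sub>R mat 1)) 0"
      using LMI[rule_format, of x] unfolding Let_def
      unfolding X1_def[symmetric] M_def[symmetric] Ae_def[symmetric] Be_def[symmetric] Ce_def[symmetric]
        zb_def[symmetric] P_def[symmetric] Q_def[symmetric] \<phi>_def[symmetric] g_def[symmetric] s_def[symmetric] .
    have etap: "\<eta> x > 0" using eta_pos by blast
    have B3: "s + (norm (\<eta> x *\<^sub>R (P *v \<phi> x)))^2/(2*\<eta> x) + (norm (msqrt Q *v g))^2/(2*\<eta> x) \<le> 0"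
      by (rule block3_neg[OF H etap])
    define a where "a = norm (P *v \<phi> x)"
    define b where "b = norm (msqrt Q *v g)"
    have n1: "(norm (\<eta> x *\<^sub>R (P *v \<phi> x)))^2/(2*\<eta> x) = \<eta> x * a^2 / 2"
      unfolding a_def using etap by (simp add: power2_eq_square field_simps)
    have amgm: "b * a \<le> \<eta> x * a^2 / 2 + b^2/(2*\<eta> x)"
    proof -
      have "0 \<le> (\<eta> x * a - b)^2" by simp
      then have "2 * \<eta> x * (b * a) \<le> \<eta> x * (\<eta> x * a^2) + b^2"
        by (simp add: power2_eq_square algebra_simps)
      then show ?thesis using etap by (simp add: field_simps power2_eq_square)
    qed
    have "grad h x \<bullet> f x = g \<bullet> (transpose (transpose AB) *v \<phi> x)" unfolding g_def f_AB by simp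
    also have "\<dots> \<le> g \<bullet> (transpose zb *v \<phi> x) + b * a"
      using kb(2)[of g "\<phi> x"] unfolding a_def b_def .
    also have "\<dots> \<le> - l x * h x - \<epsilon>"
      using B3 amgm n1 unfolding s_def b_def[symmetric] by linarith
    finally show ?thesis .
  qed
  have hd: "(h has_derivative (\<lambda>v. grad h y \<bullet> v)) (at y)" for y
    by (rule grad_deriv[OF poly_differentiable[OF polys(3)]])
  have "invariant_set f {x. h x \<le> 0}"
    by (rule invariance[OF hd deriv_bound eps])
  then show ?thesis unfolding f_def .
qed


end
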